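(* Let $n\ge1$, let $G^\star=([n],E^\star)$ be a directed graph (directed cycles allowed), let $t\ge1$ and let $(a_0,a_1,\dots,a_{t+1})\in[n]^{t+2}$ be such that $a_i$ and $a_{i+1}$ are $p$-adjacent in $G^\star$ for all $i\in\{0,\dots,t\}$, and $a_i$ and $a_j$ are not $p$-adjacent in $G^\star$ for all $i\in\{2,\dots,t+1\}$ and $j\in\{0,\dots,i-2\}$. Then at least one of the following holds: (1) each of $a_1,\dots,a_t$ is an ancestor of $a_0$ or of $a_{t+1}$ in $G^\star$; or (2) there exist $j,\ell\in\{1,\dots,t\}$ with $j\le\ell$ such that $(a_{j-1},a_j,a_{j+1})$ and $(a_{\ell-1},a_\ell,a_{\ell+1})$ are mutually exclusive with respect to the uncovered itinerary $(a_{j-1},a_j,\dots,a_{\ell+1})$ in $G^\star$.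
   Context: In a directed graph $G$, $a$ is an ancestor of $b$ if $a=b$ or there is a directed path from $a$ to $b$. Distinct vertices $a,b$ are $p$-adjacent in $G$ if there is an edge between them (in either direction), or $a$ and $b$ have a common child in $G$ that is an ancestor of $a$ or of $b$. For $s\ge1$ and vertices $b_0,b_1,\dots,b_{s+1}$, the triples $(b_0,b_1,b_2)$ and $(b_{s-1},b_s,b_{s+1})$ are mutually exclusive with respect to the uncovered itinerary $(b_0,\dots,b_{s+1})$ in $G$ if: $b_i$ and $b_{i-1}$ are $p$-adjacent for all $i\in\{1,\dots,s+1\}$; $b_i$ and $b_j$ are not $p$-adjacent for all $i\in\{2,\dots,s+1\}$, $j\in\{0,\dots,i-2\}$; $b_i$ is an ancestor of $b_{i+1}$ for all $i\in\{1,\dots,s-1\}$; $b_i$ is an ancestor of $b_{i-1}$ for all $i\in\{2,\dots,s\}$; and $b_1$ is an ancestor of neither $b_0$ nor $b_{s+1}$. *)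

theory Defs
  imports Main
begin

definition ancestor :: "('a \<times> 'a) set \<Rightarrow> 'a \<Rightarrow> 'a \<Rightarrow> bool" where
  "ancestor E a b \<longleftrightarrow> a = b \<or> (a, b) \<in> E\<^sup>+"

definition p_adjacent :: "('a \<times> 'a) set \<Rightarrow> 'a \<Rightarrow> 'a \<Rightarrow> bool" where
  "p_adjacent E a b \<longleftrightarrow> a \<noteq> b \<and>
     ((a, b) \<in> E \<or> (b, a) \<in> E \<or>
      (\<exists>c. (a, c) \<in> E \<and> (b, c) \<in> E \<and> (ancestor E c a \<or> ancestor E c b)))"

text \<open>The triples (b 0, b 1, b 2) and (b (s-1), b s, b (s+1)) are mutually exclusive
  w.r.t. the uncovered itinerary (b 0, ..., b (s+1)).\<close>
definition mutually_exclusive :: "('a \<times> 'a) set \<Rightarrow> (nat \<Rightarrow> 'a) \<Rightarrow> nat \<Rightarrow> bool" where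
  "mutually_exclusive E b s \<longleftrightarrow> s \<ge> 1 \<and>
     (\<forall>i\<in>{1..s+1}. p_adjacent E (b i) (b (i - 1))) \<and>
     (\<forall>i\<in>{2..s+1}. \<forall>j\<in>{0..i-2}. \<not> p_adjacent E (b i) (b j)) \<and>
     (\<forall>i\<in>{1..s-1}. ancestor E (b i) (b (i + 1))) \<and>
     (\<forall>i\<in>{2..s}. ancestor E (b i) (b (i - 1))) \<and>
     \<not> ancestor E (b 1) (b 0) \<and> \<not> ancestor E (b 1) (b (s + 1))"

end

theory Submission
  imports Defs
begin

lemma anc_trans: "ancestor E x y \<Longrightarrow> ancestor E y z \<Longrightarrow> ancestor E x z"
  unfolding ancestor_def by (meson trancl_trans)

lemma anc_refl: "ancestor E x x"
  unfolding ancestor_def by simp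

lemma padj_sym: "p_adjacent E x y \<Longrightarrow> p_adjacent E y x"
  unfolding p_adjacent_def by blast

theorem lemma3p12:
  fixes n t :: nat and E :: "(nat \<times> nat) set" and a :: "nat \<Rightarrow> nat"
  assumes "n \<ge> 1"
    and "E \<subseteq> {1..n} \<times> {1..n}"
    and "t \<ge> 1"
    and "\<forall>i\<in>{0..t+1}. a i \<in> {1..n}"
    and "\<forall>i\<in>{0..t}. p_adjacent E (a i) (a (i + 1))"
    and "\<forall>i\<in>{2..t+1}. \<forall>j\<in>{0..i-2}. \<not> p_adjacent E (a i) (a j)"
  shows "(\<forall>i\<in>{1..t}. ancestor E (a i) (a 0) \<or> ancestor E (a i) (a (t + 1))) \<or>
         (\<exists>j\<in>{1..t}. \<exists>l\<in>{1..t}. j \<le> l \<and>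
            mutually_exclusive E (\<lambda>i. a (j - 1 + i)) (l - j + 1))"
proof (cases "\<forall>i\<in>{1..t}. ancestor E (a i) (a 0) \<or> ancestor E (a i) (a (t + 1))")
  case True thus ?thesis by blast
next
  case False
  define P where "P i \<longleftrightarrow> i \<in> {1..t} \<and> \<not> ancestor E (a i) (a 0) \<and> \<not> ancestor E (a i) (a (t+1))" for i
  define C where "C i = {k \<in> {0..t+1}. ancestor E (a i) (a k)}" for i
  from False obtain i0 where "P i0" unfolding P_def by blast
  then obtain i where Pi: "P i" and imin: "\<forall>k. P k \<longrightarrow> card (C i) \<le> card (C k)"
    using ex_has_least_nat[of P i0 "\<lambda>i. card (C i)"] by blast
  have iC: "i \<in> C i" using Pi unfolding P_def C_def by (auto simp: anc_refl)
  have CP: "P k" if "k \<in> C i" for k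
  proof -
    have a: "ancestor E (a i) (a k)" and kr: "k \<in> {0..t+1}" using that unfolding C_def by auto
    have k0: "k \<noteq> 0" proof assume "k = 0" thus False using a Pi unfolding P_def by simp qed
    moreover have kt: "k \<noteq> t+1" proof assume "k = t+1" thus False using a Pi unfolding P_def by simp qed
    moreover have "\<not> ancestor E (a k) (a 0)" "\<not> ancestor E (a k) (a (t+1))"
      using anc_trans[OF a, of "a 0"] anc_trans[OF a, of "a (t+1)"] Pi unfolding P_def by blast+
    ultimately show ?thesis using kr k0 kt unfolding P_def by auto
  qed
  have bck: "ancestor E (a k) (a i)" if "k \<in> C i" for k
  proof -
    have sub: "C k \<subseteq> C i"
    proof
      fix m assume "m \<in> C k"
      thus "m \<in> C i" using that anc_trans[of E "a i" "a k" "a m"] unfolding C_def by simp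
    qed
    have "card (C i) \<le> card (C k)" using imin CP[OF that] by blast
    hence "C k = C i" using sub by (intro card_seteq) (auto simp: C_def)
    thus ?thesis using iC unfolding C_def by auto
  qed
  have mut: "ancestor E (a k) (a m)" if "k \<in> C i" "m \<in> C i" for k m
    using bck[OF that(1)] that(2) anc_trans[of E "a k" "a i" "a m"] unfolding C_def by simp
  have notC: "\<not> ancestor E (a k) (a m)" if "k \<in> C i" "m \<notin> C i" "m \<in> {0..t+1}" for k m
    using that anc_trans[of E "a i" "a k" "a m"] unfolding C_def by auto
  have i1: "1 \<le> i" "i \<le> t" using Pi unfolding P_def by auto
  have C0: "0 \<notin> C i" using CP[of 0] unfolding P_def by auto
  have Ct: "t+1 \<notin> C i" using CP[of "t+1"] unfolding P_def by auto
  define p where "p = (GREATEST k. k \<le> i \<and> k \<notin> C i)"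
  have p1: "p \<le> i \<and> p \<notin> C i" unfolding p_def
    by (rule GreatestI_nat[of _ 0 i]) (use C0 in auto)
  have p2: "k \<in> C i" if "p < k" "k \<le> i" for k
    using Greatest_le_nat[of "\<lambda>k. k \<le> i \<and> k \<notin> C i" k i] that unfolding p_def[symmetric] by auto
  define q where "q = (LEAST k. i \<le> k \<and> k \<notin> C i)"
  have q1: "i \<le> q \<and> q \<notin> C i" unfolding q_def
    by (rule LeastI[of _ "t+1"]) (use Ct i1 in auto)
  have q0: "q \<le> t+1" unfolding q_def by (rule Least_le) (use Ct i1 in auto)
  have q2: "k \<in> C i" if "i \<le> k" "k < q" for k
    using not_less_Least[of k "\<lambda>k. i \<le> k \<and> k \<notin> C i"] that unfolding q_def[symmetric] by auto
  have inC: "k \<in> C i" if "p < k" "k < q" for k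
    using p2 q2 that by (cases "k \<le> i") auto
  have pi: "p < i" using p1 iC by (cases "p = i") auto
  have qi: "i < q" using q1 iC by (cases "q = i") auto
  have pC: "p \<in> {0..t+1}" "q \<in> {0..t+1}" using pi i1 q0 by auto
  show ?thesis
  proof (rule disjI2, rule bexI[where x="p+1"], rule bexI[where x="q-1"], rule conjI)
    show "p + 1 \<le> q - 1" using pi qi by simp
    let ?s = "q - 1 - (p + 1) + 1"
    have s: "?s = q - p - 1" using pi qi by simp
    show "mutually_exclusive E (\<lambda>i. a (p + 1 - 1 + i)) ?s"
      unfolding mutually_exclusive_def s
    proof (intro conjI ballI)
      show "1 \<le> q - p - 1" using pi qi by simp
    next
      fix k assume "k \<in> {1..q - p - 1 + 1}"
      thus "p_adjacent E (a (p + 1 - 1 + k)) (a (p + 1 - 1 + (k - 1)))"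
        using assms(5)[rule_format, of "p + k - 1"] q0 pi qi by (auto intro: padj_sym)
    next
      fix k m assume km: "k \<in> {2..q - p - 1 + 1}" "m \<in> {0..k - 2}"
      have "p + k \<in> {2..t+1}" "p + m \<in> {0..p + k - 2}" using km q0 pi qi by auto
      thus "\<not> p_adjacent E (a (p + 1 - 1 + k)) (a (p + 1 - 1 + m))"
        using assms(6) by simp
    next
      fix k assume "k \<in> {1..q - p - 1 - 1}"
      thus "ancestor E (a (p + 1 - 1 + k)) (a (p + 1 - 1 + (k + 1)))"
        using mut inC by auto
    next
      fix k assume "k \<in> {2..q - p - 1}"
      thus "ancestor E (a (p + 1 - 1 + k)) (a (p + 1 - 1 + (k - 1)))"
        using mut inC by auto
    next
      show "\<not> ancestor E (a (p + 1 - 1 + 1)) (a (p + 1 - 1 + 0))"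
        using notC[of "p+1" p] inC[of "p+1"] p1 pC pi qi by auto
    next
      show "\<not> ancestor E (a (p + 1 - 1 + 1)) (a (p + 1 - 1 + (q - p - 1 + 1)))"
        using notC[of "p+1" q] inC[of "p+1"] q1 pC pi qi by auto
    qed
  next
    show "q - 1 \<in> {1..t}" using pi qi q0 by auto
  next
    show "p + 1 \<in> {1..t}" using pi qi i1 by auto
  qed
qed

end
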